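(* Fix real numbers $\alpha,\beta,\gamma,\delta$ with $\alpha\neq0$. Let $\mathscr T$ be a graph-enriched Schröder tree on a finite linear order $\ell$ with $|\ell|\ge2$, with root $r$ and $g=\bigvee\mathscr T$. Then, as an identity in $\mathbb C(x)$, $$\Phi_g(x)=\Big(\prod_{w\in\mathrm{Iv}(\mathscr T),\,w\ne r}\Gamma_{g_{\ell_w}}(x-\delta N_{rw})\,\det\big(U_\Gamma(a_w,g_w)(x-\delta N_{rw})\big)\Big)\det\big(U_\Gamma(a_r,g_r)(x)\big).$$
   Context: All graphs finite and simple. For a graph $g$ with $n$ vertices, the universal adjacency matrix is $U(g)=\alpha A(g)+\beta I_n+\gamma J_n+\delta D(g)$, where $A$ is the adjacency matrix, $D$ the diagonal degree matrix, $J_n$ the all-ones matrix. $\Phi_g(x)=\det(xI_n-U(g))$ and $\Gamma_g(x)=\mathbf 1^t(xI_n-U(g))^{-1}\mathbf 1\in\mathbb C(x)$, with $\mathbf 1$ the all-ones vector. Generalized composition: for a segmented partition $\pi=(\ell_1,\dots,\ell_k)$ of $\ell$ (nonempty consecutive segments whose concatenation is $\ell$), graphs $g_{\ell_j}$ on $\ell_j$ and a graph $h$ on $\pi$, $\bigvee_h(g_{\ell_1},\dots,g_{\ell_k})$ has vertex set $\ell$ and edges those of the $g_{\ell_j}$ plus all $\{x,y\}$, $x\in\ell_i,y\in\ell_j$, $\{\ell_i,\ell_j\}\in E(h)$. Graph-enriched Schröder tree on $\ell$: rooted plane tree with leaves the elements of $\ell$ left to right, each internal vertex having at least two children, with a graph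 $g_v$ on $\pi_v=(\ell_{v_1},\dots,\ell_{v_k})$ for each internal $v$ (children $v_1,\dots,v_k$ left to right, $\ell_u$ the leaves below $u$). $\bigvee$ of a leaf is the one-vertex graph and $\bigvee\mathscr T=\bigvee_{g_r}(\bigvee\mathscr T_{r_1},\dots,\bigvee\mathscr T_{r_k})$; $g_{\ell_u}=\bigvee\mathscr T_u$; $a_v=(g_{\ell_{v_1}},\dots,g_{\ell_{v_k}})$. For internal $v$ with $n_i=|\ell_{v_i}|$ and $N_i=\sum_{s:\{\ell_{v_s},\ell_{v_i}\}\in E(g_v)}n_s$: $D_\Gamma(a_v,g_v)(x)=\mathrm{diag}\big(1/\Gamma_{g_{\ell_{v_i}}}(x-\delta N_i)\big)_{i=1}^k$ and $U_\Gamma(a_v,g_v)(x)=-\alpha A(g_v)+\gamma I_k-\gamma J_k+D_\Gamma(a_v,g_v)(x)$ (with $A(g_v)$ indexed by $\pi_v$ in order). For non-root internal $w$ with parent $u$, $N_w=\sum_{x:\{\ell_x,\ell_w\}\in E(g_u)}|\ell_x|$, and $N_{rw}=N_{w_1}+\cdots+N_{w_m}$ along the path $r=w_0,w_1,\dots,w_m=w$. *)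

theory Defs
  imports Complex_Main "Jordan_Normal_Form.Gauss_Jordan_Elimination" "Jordan_Normal_Form.Determinant"
begin

text \<open>Graphs on a finite linear order with n elements are represented on the vertex
  set {0..<n} (natural order) by an edge predicate E; only pairs in {0..<n} matter.\<close>

definition sgraph :: "nat \<Rightarrow> (nat \<Rightarrow> nat \<Rightarrow> bool) \<Rightarrow> bool" where
  "sgraph n E \<longleftrightarrow> (\<forall>i<n. \<forall>j<n. E i j = E j i) \<and> (\<forall>i<n. \<not> E i i)"

definition adjm :: "nat \<Rightarrow> (nat \<Rightarrow> nat \<Rightarrow> bool) \<Rightarrow> complex mat" where
  "adjm n E = mat n n (\<lambda>(i,j). if E i j then 1 else 0)"

definition degree :: "nat \<Rightarrow> (nat \<Rightarrow> nat \<Rightarrow> bool) \<Rightarrow> nat \<Rightarrow> nat" where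
  "degree n E i = card {j. j < n \<and> E i j}"

definition degm :: "nat \<Rightarrow> (nat \<Rightarrow> nat \<Rightarrow> bool) \<Rightarrow> complex mat" where
  "degm n E = mat n n (\<lambda>(i,j). if i = j then of_nat (degree n E i) else 0)"

definition allones :: "nat \<Rightarrow> complex mat" where
  "allones n = mat n n (\<lambda>_. 1)"

definition onesv :: "nat \<Rightarrow> complex vec" where
  "onesv n = vec n (\<lambda>_. 1)"

definition Umat :: "real \<Rightarrow> real \<Rightarrow> real \<Rightarrow> real \<Rightarrow> nat \<Rightarrow> (nat \<Rightarrow> nat \<Rightarrow> bool) \<Rightarrow> complex mat" where
  "Umat \<alpha> \<beta> \<gamma> \<delta> n E =
     complex_of_real \<alpha> \<cdot>\<^sub>m adjm n E + complex_of_real \<beta> \<cdot>\<^sub>m 1\<^sub>m n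
     + complex_of_real \<gamma> \<cdot>\<^sub>m allones n + complex_of_real \<delta> \<cdot>\<^sub>m degm n E"

definition Phi :: "real \<Rightarrow> real \<Rightarrow> real \<Rightarrow> real \<Rightarrow> nat \<Rightarrow> (nat \<Rightarrow> nat \<Rightarrow> bool) \<Rightarrow> complex \<Rightarrow> complex" where
  "Phi \<alpha> \<beta> \<gamma> \<delta> n E x = det (x \<cdot>\<^sub>m 1\<^sub>m n - Umat \<alpha> \<beta> \<gamma> \<delta> n E)"

text \<open>Pointwise value of Gamma_g(x) = 1^t (xI - U)^{-1} 1 (set to 0 where xI - U is singular).\<close>
definition Gamma :: "real \<Rightarrow> real \<Rightarrow> real \<Rightarrow> real \<Rightarrow> nat \<Rightarrow> (nat \<Rightarrow> nat \<Rightarrow> bool) \<Rightarrow> complex \<Rightarrow> complex" where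
  "Gamma \<alpha> \<beta> \<gamma> \<delta> n E x =
     (case mat_inverse (x \<cdot>\<^sub>m 1\<^sub>m n - Umat \<alpha> \<beta> \<gamma> \<delta> n E) of
        Some B \<Rightarrow> onesv n \<bullet> (B *\<^sub>v onesv n)
      | None \<Rightarrow> 0)"

text \<open>Generalized composition of graphs gs = [(n_1,E_1),...,(n_k,E_k)] along h on {0..<k}:
  the j-th graph occupies the consecutive segment of {0..<n_1+...+n_k}.\<close>
definition offs :: "(nat \<times> (nat \<Rightarrow> nat \<Rightarrow> bool)) list \<Rightarrow> nat \<Rightarrow> nat" where
  "offs gs i = sum_list (map fst (take i gs))"

definition compose :: "(nat \<Rightarrow> nat \<Rightarrow> bool) \<Rightarrow> (nat \<times> (nat \<Rightarrow> nat \<Rightarrow> bool)) list \<Rightarrow> nat \<Rightarrow> nat \<Rightarrow> bool" where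
  "compose h gs u v \<longleftrightarrow>
     (\<exists>i<length gs. \<exists>j<length gs.
        offs gs i \<le> u \<and> u < offs gs i + fst (gs!i) \<and>
        offs gs j \<le> v \<and> v < offs gs j + fst (gs!j) \<and>
        (if i = j then snd (gs!i) (u - offs gs i) (v - offs gs i) else h i j))"

text \<open>Graph-enriched Schroeder trees: a node carries the graph on its children (indexed
  0..<k in left-to-right order) and the list of subtrees; leaves are labelled implicitly
  by their left-to-right position, so a tree on l is a tree with |l| leaves on {0..<|l|}.\<close>
datatype stree = Leaf | Node "nat \<Rightarrow> nat \<Rightarrow> bool" "stree list"

fun nleaves :: "stree \<Rightarrow> nat" where
  "nleaves Leaf = 1"
| "nleaves (Node h ts) = sum_list (map nleaves ts)"

fun wf_stree :: "stree \<Rightarrow> bool" where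
  "wf_stree Leaf = True"
| "wf_stree (Node h ts) = (length ts \<ge> 2 \<and> sgraph (length ts) h \<and> (\<forall>t\<in>set ts. wf_stree t))"

fun gr :: "stree \<Rightarrow> nat \<Rightarrow> nat \<Rightarrow> bool" where
  "gr Leaf = (\<lambda>u v. False)"
| "gr (Node h ts) = compose h (map (\<lambda>t. (nleaves t, gr t)) ts)"

text \<open>Vertices of the tree are addressed by paths of child indices from the root.\<close>
fun subtree :: "stree \<Rightarrow> nat list \<Rightarrow> stree" where
  "subtree t [] = t"
| "subtree Leaf (i # p) = Leaf"
| "subtree (Node h ts) (i # p) = subtree (ts ! i) p"

fun valid_path :: "stree \<Rightarrow> nat list \<Rightarrow> bool" where
  "valid_path t [] = True"
| "valid_path Leaf (i # p) = False"
| "valid_path (Node h ts) (i # p) = (i < length ts \<and> valid_path (ts ! i) p)"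

fun is_node :: "stree \<Rightarrow> bool" where
  "is_node Leaf = False"
| "is_node (Node h ts) = True"

definition internal :: "stree \<Rightarrow> nat list set" where
  "internal t = {p. valid_path t p \<and> is_node (subtree t p)}"

fun Nchild :: "stree \<Rightarrow> nat \<Rightarrow> nat" where
  "Nchild Leaf i = 0"
| "Nchild (Node h ts) i = (\<Sum>s<length ts. if h s i then nleaves (ts ! s) else 0)"

fun Npath :: "stree \<Rightarrow> nat list \<Rightarrow> nat" where
  "Npath t [] = 0"
| "Npath Leaf (i # p) = 0"
| "Npath (Node h ts) (i # p) = Nchild (Node h ts) i + Npath (ts ! i) p"

fun UGamma :: "real \<Rightarrow> real \<Rightarrow> real \<Rightarrow> real \<Rightarrow> stree \<Rightarrow> complex \<Rightarrow> complex mat" where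
  "UGamma \<alpha> \<beta> \<gamma> \<delta> Leaf x = 0\<^sub>m 0 0"
| "UGamma \<alpha> \<beta> \<gamma> \<delta> (Node h ts) x =
     - (complex_of_real \<alpha> \<cdot>\<^sub>m adjm (length ts) h) + complex_of_real \<gamma> \<cdot>\<^sub>m 1\<^sub>m (length ts)
     - complex_of_real \<gamma> \<cdot>\<^sub>m allones (length ts)
     + mat (length ts) (length ts) (\<lambda>(i,j). if i = j then
         1 / Gamma \<alpha> \<beta> \<gamma> \<delta> (nleaves (ts ! i)) (gr (ts ! i))
               (x - complex_of_real \<delta> * of_nat (Nchild (Node h ts) i))
         else 0)"

end

theory Submission
  imports Defs "Jordan_Normal_Form.Char_Poly"
begin


lemma sylvester_det:
  fixes X Y :: "'a :: idom mat"
  assumes X: "X \<in> carrier_mat n k" and Y: "Y \<in> carrier_mat k n"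
  shows "det (1\<^sub>m n + X * Y) = det (1\<^sub>m k + Y * X)"
proof -
  define A where "A = four_block_mat (1\<^sub>m n) X (0\<^sub>m k n) (1\<^sub>m k)"
  define M where "M = four_block_mat (1\<^sub>m n) (-X) Y (1\<^sub>m k)"
  have A: "A \<in> carrier_mat (n+k) (n+k)" unfolding A_def using X by auto
  have M: "M \<in> carrier_mat (n+k) (n+k)" unfolding M_def using X Y by auto
  have AM: "A * M = four_block_mat (1\<^sub>m n + X * Y) (0\<^sub>m n k) Y (1\<^sub>m k)"
    unfolding A_def M_def
    apply (subst mult_four_block_mat[of _ n n _ k _ k _ _ n _ k])
    using X Y by (auto intro!: cong_four_block_mat eq_matI)
  have MA: "M * A = four_block_mat (1\<^sub>m n) (0\<^sub>m n k) Y (1\<^sub>m k + Y * X)"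
    unfolding A_def M_def
    apply (subst mult_four_block_mat[of _ n n _ k _ k _ _ n _ k])
    using X Y by (auto intro!: cong_four_block_mat eq_matI simp: add.commute)
  have dA: "det A = 1" unfolding A_def
    by (subst det_four_block_mat_lower_left_zero[of _ n _ k]) (use X in auto)
  have "det (1\<^sub>m n + X * Y) = det (A * M)"
    unfolding AM by (subst det_four_block_mat_upper_right_zero[of _ n _ k]) (use X Y in auto)
  also have "\<dots> = det (M * A)" using det_mult[OF A M] det_mult[OF M A] by (simp add: mult.commute)
  also have "\<dots> = det (1\<^sub>m k + Y * X)"
    unfolding MA by (subst det_four_block_mat_upper_right_zero[of _ n _ k]) (use X Y in auto)
  finally show ?thesis .
qed



fun blk :: "nat list \<Rightarrow> nat \<Rightarrow> nat" where
  "blk [] u = 0"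
| "blk (a # ns) u = (if u < a then 0 else Suc (blk ns (u - a)))"

definition boff :: "nat list \<Rightarrow> nat \<Rightarrow> nat" where
  "boff ns j = sum_list (take j ns)"

lemma boff_0[simp]: "boff ns 0 = 0" by (simp add: boff_def)
lemma boff_Cons_Suc[simp]: "boff (a # ns) (Suc j) = a + boff ns j" by (simp add: boff_def)

lemma blk_bound:
  assumes "u < sum_list ns"
  shows "blk ns u < length ns \<and> boff ns (blk ns u) \<le> u \<and> u < boff ns (blk ns u) + ns ! (blk ns u)"
  using assms
proof (induction ns arbitrary: u)
  case Nil then show ?case by simp
next
  case (Cons a ns)
  show ?case
  proof (cases "u < a")
    case True then show ?thesis by simp
  next
    case False
    then have "u - a < sum_list ns" using Cons.prems by simp
    from Cons.IH[OF this] False show ?thesis by auto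
  qed
qed

lemma blk_off:
  assumes "j < length ns" "v < ns ! j"
  shows "blk ns (boff ns j + v) = j"
  using assms
proof (induction ns arbitrary: j)
  case Nil then show ?case by simp
next
  case (Cons a ns)
  then show ?case by (cases j) auto
qed

lemma blk_unique:
  assumes "j < length ns" "boff ns j \<le> u" "u < boff ns j + ns ! j"
  shows "blk ns u = j"
  using blk_off[OF assms(1), of "u - boff ns j"] assms by simp

lemma boff_le_sum: "j < length ns \<Longrightarrow> boff ns j + ns ! j \<le> sum_list ns"
proof (induction ns arbitrary: j)
  case Nil then show ?case by simp
next
  case (Cons a ns)
  then show ?case by (cases j) auto
qed

lemma sum_split:
  "(\<Sum>u<sum_list ns. f u) = (\<Sum>j<length ns. \<Sum>v<ns ! j. f (boff ns j + v))"
proof (induction ns arbitrary: f)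
  case Nil then show ?case by simp
next
  case (Cons a ns)
  have "(\<Sum>u<sum_list (a # ns). f u) = (\<Sum>u<a. f u) + (\<Sum>u<sum_list ns. f (a + u))"
    by (simp add: sum.atLeastLessThan_shift_bounds lessThan_atLeast0 sum.atLeastLessThan_concat[symmetric]
      add.commute[of a] sum.shift_bounds_nat_ivl[symmetric])
  also have "(\<Sum>u<sum_list ns. f (a + u)) = (\<Sum>j<length ns. \<Sum>v<ns ! j. f (a + (boff ns j + v)))"
    using Cons.IH[of "\<lambda>u. f (a + u)"] .
  finally show ?case unfolding length_Cons sum.lessThan_Suc_shift by (simp add: add.assoc)
qed

definition bdiag :: "'a::comm_ring_1 mat list \<Rightarrow> 'a mat" where
  "bdiag Ms = (let ns = map dim_row Ms; n = sum_list ns in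
     mat n n (\<lambda>(u,v). if blk ns u = blk ns v then
       (Ms ! blk ns u) $$ (u - boff ns (blk ns u), v - boff ns (blk ns u)) else 0))"

lemma bdiag_carrier: "bdiag Ms \<in> carrier_mat (sum_list (map dim_row Ms)) (sum_list (map dim_row Ms))"
  unfolding bdiag_def Let_def by simp

lemma bdiag_Cons:
  assumes A: "A \<in> carrier_mat a a"
  shows "bdiag (A # Ms) = four_block_mat A (0\<^sub>m a (sum_list (map dim_row Ms)))
     (0\<^sub>m (sum_list (map dim_row Ms)) a) (bdiag Ms)"
proof (rule eq_matI)
  let ?m = "sum_list (map dim_row Ms)"
  fix i j assume i: "i < dim_row (four_block_mat A (0\<^sub>m a ?m) (0\<^sub>m ?m a) (bdiag Ms))"
    and j: "j < dim_col (four_block_mat A (0\<^sub>m a ?m) (0\<^sub>m ?m a) (bdiag Ms))"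
  have dims: "dim_row A = a" "dim_col A = a" using A by auto
  from i j have i': "i < a + ?m" and j': "j < a + ?m" using bdiag_carrier[of Ms] dims by auto
  show "bdiag (A # Ms) $$ (i, j) = four_block_mat A (0\<^sub>m a ?m) (0\<^sub>m ?m a) (bdiag Ms) $$ (i, j)"
    using i' j' dims bdiag_carrier[of Ms]
    by (auto simp: bdiag_def Let_def)
qed (use A bdiag_carrier[of Ms] in \<open>auto simp: bdiag_def Let_def\<close>)

lemma det_bdiag:
  fixes Ms :: "'a :: idom mat list"
  assumes "\<And>M. M \<in> set Ms \<Longrightarrow> M \<in> carrier_mat (dim_row M) (dim_row M)"
  shows "det (bdiag Ms) = prod_list (map det Ms)"
  using assms
proof (induction Ms)
  case Nil
  have "bdiag ([] :: 'a mat list) = 1\<^sub>m 0" by (rule eq_matI) (auto simp: bdiag_def)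
  then show ?case by simp
next
  case (Cons A Ms)
  have A: "A \<in> carrier_mat (dim_row A) (dim_row A)" using Cons.prems by simp
  show ?case
    unfolding bdiag_Cons[OF A]
    by (subst det_four_block_mat_upper_right_zero[OF A refl _ bdiag_carrier])
       (use Cons in auto)
qed

lemma offs_boff: "Defs.offs gs i = boff (map fst gs) i"
  by (simp add: offs_def boff_def take_map)

lemma compose_iff:
  assumes u: "u < sum_list (map fst gs)" and v: "v < sum_list (map fst gs)"
  shows "compose h gs u v \<longleftrightarrow>
    (if blk (map fst gs) u = blk (map fst gs) v then
       snd (gs ! blk (map fst gs) u) (u - boff (map fst gs) (blk (map fst gs) u))
          (v - boff (map fst gs) (blk (map fst gs) u))
     else h (blk (map fst gs) u) (blk (map fst gs) v))"
proof -
  let ?ns = "map fst gs"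
  note bu = blk_bound[OF u] and bv = blk_bound[OF v]
  show ?thesis
  proof
    assume "compose h gs u v"
    then obtain i j where ij: "i < length gs" "j < length gs"
      "offs gs i \<le> u" "u < offs gs i + fst (gs!i)"
      "offs gs j \<le> v" "v < offs gs j + fst (gs!j)"
      "if i = j then snd (gs!i) (u - offs gs i) (v - offs gs i) else h i j"
      unfolding compose_def by blast
    have ij7: "if i = j then snd (gs!i) (u - boff ?ns i) (v - boff ?ns i) else h i j"
      using ij(7) unfolding offs_boff .
    have "blk ?ns u = i" using ij by (intro blk_unique) (auto simp: offs_boff)
    moreover have "blk ?ns v = j" using ij by (intro blk_unique) (auto simp: offs_boff)
    ultimately show "(if blk ?ns u = blk ?ns v then
       snd (gs ! blk ?ns u) (u - boff ?ns (blk ?ns u)) (v - boff ?ns (blk ?ns u))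
     else h (blk ?ns u) (blk ?ns v))" using ij7 by auto
  next
    assume "(if blk ?ns u = blk ?ns v then
       snd (gs ! blk ?ns u) (u - boff ?ns (blk ?ns u)) (v - boff ?ns (blk ?ns u))
     else h (blk ?ns u) (blk ?ns v))"
    then show "compose h gs u v" unfolding compose_def using bu bv
      by (intro exI[of _ "blk ?ns u"] conjI exI[of _ "blk ?ns v"]) (auto simp: offs_boff)
  qed
qed

lemma card_less_sum: "card {j. j < (n::nat) \<and> P j} = (\<Sum>j<n. if P j then 1 else 0)"
proof (induction n)
  case 0 then show ?case by simp
next
  case (Suc n)
  have "{j. j < Suc n \<and> P j} = (if P n then insert n {j. j < n \<and> P j} else {j. j < n \<and> P j})"
    by (auto simp: less_Suc_eq)
  then show ?case using Suc by simp
qed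

lemma degree_sum: "degree n E u = (\<Sum>v<n. if E u v then 1 else 0)"
  unfolding degree_def by (rule card_less_sum)

lemma degree_compose:
  assumes sym: "\<And>i j. i < length gs \<Longrightarrow> j < length gs \<Longrightarrow> h i j = h j i"
    and irr: "\<And>i. i < length gs \<Longrightarrow> \<not> h i i"
    and u: "u < sum_list (map fst gs)"
  shows "degree (sum_list (map fst gs)) (compose h gs) u =
    degree (fst (gs ! blk (map fst gs) u)) (snd (gs ! blk (map fst gs) u)) (u - boff (map fst gs) (blk (map fst gs) u))
    + (\<Sum>s<length gs. if h s (blk (map fst gs) u) then fst (gs ! s) else 0)"
proof -
  let ?ns = "map fst gs"
  define b where "b = blk ?ns u"
  note bu = blk_bound[OF u, folded b_def]
  have "degree (sum_list ?ns) (compose h gs) u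
     = (\<Sum>j<length ?ns. \<Sum>v<?ns ! j. if compose h gs u (boff ?ns j + v) then 1 else 0)"
    unfolding degree_sum by (rule sum_split)
  also have "\<dots> = (\<Sum>j<length gs. (if j = b then degree (fst (gs ! b)) (snd (gs ! b)) (u - boff ?ns b) else 0)
       + (if h j b then fst (gs ! j) else 0))"
  proof (rule sum.cong)
    fix j assume j: "j \<in> {..<length gs}"
    have "(\<Sum>v<?ns ! j. if compose h gs u (boff ?ns j + v) then 1 else 0)
       = (\<Sum>v<?ns ! j. if (if b = j then snd (gs ! b) (u - boff ?ns b) v else h b j) then 1 else 0)"
    proof (rule sum.cong)
      fix v assume v: "v \<in> {..<?ns ! j}"
      have bv: "blk ?ns (boff ?ns j + v) = j" using j v by (intro blk_off) auto
      have vl: "boff ?ns j + v < sum_list ?ns" using boff_le_sum[of j ?ns] j v by auto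
      show "(if compose h gs u (boff ?ns j + v) then 1 else 0) =
          (if (if b = j then snd (gs ! b) (u - boff ?ns b) v else h b j) then 1 else 0)"
        unfolding compose_iff[OF u vl] bv b_def[symmetric] by auto
    qed simp
    also have "\<dots> = (if j = b then degree (fst (gs ! b)) (snd (gs ! b)) (u - boff ?ns b) else 0)
       + (if h j b then fst (gs ! j) else 0)"
      using j irr[of b] sym[of b j] bu by (auto simp: degree_sum)
    finally show "(\<Sum>v<?ns ! j. if compose h gs u (boff ?ns j + v) then 1 else 0) =
       (if j = b then degree (fst (gs ! b)) (snd (gs ! b)) (u - boff ?ns b) else 0)
       + (if h j b then fst (gs ! j) else 0)" .
  qed simp
  also have "\<dots> = degree (fst (gs ! b)) (snd (gs ! b)) (u - boff ?ns b)
    + (\<Sum>s<length gs. if h s b then fst (gs ! s) else 0)"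
    using bu by (simp add: sum.distrib)
  finally show ?thesis unfolding b_def .
qed



lemma sum_delta_blk: "(j::nat) < k \<Longrightarrow> (\<Sum>i<k. (if j = i then 1 else 0) * (f i :: 'a::comm_ring_1)) = f j"
proof -
  assume j: "j < k"
  have "(\<Sum>i<k. (if j = i then 1 else 0) * f i) = (\<Sum>i<k. if j = i then f j else 0)"
    by (rule sum.cong) auto
  also have "\<dots> = f j" using j by simp
  finally show ?thesis .
qed

lemma schur_blocks:
  fixes Mx C :: "complex mat" and Ms Bs :: "complex mat list"
  defines "ns \<equiv> map dim_row Ms"
  defines "n \<equiv> sum_list ns"
  defines "k \<equiv> length Ms"
  defines "g \<equiv> \<lambda>i. onesv (ns ! i) \<bullet> ((Bs ! i) *\<^sub>v onesv (ns ! i))"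
  assumes lenB: "length Bs = k"
    and Ms: "\<And>i. i < k \<Longrightarrow> Ms ! i \<in> carrier_mat (ns ! i) (ns ! i)"
    and Bs: "\<And>i. i < k \<Longrightarrow> Bs ! i \<in> carrier_mat (ns ! i) (ns ! i)"
    and inv: "\<And>i. i < k \<Longrightarrow> Ms ! i * Bs ! i = 1\<^sub>m (ns ! i)"
    and Mx: "Mx \<in> carrier_mat n n" and Cc: "C \<in> carrier_mat k k"
    and Cdiag: "\<And>i. i < k \<Longrightarrow> C $$ (i, i) = 0"
    and entry: "\<And>u v. u < n \<Longrightarrow> v < n \<Longrightarrow> Mx $$ (u, v) =
       (if blk ns u = blk ns v then (Ms ! blk ns u) $$ (u - boff ns (blk ns u), v - boff ns (blk ns u))
        else - C $$ (blk ns u, blk ns v))"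
    and gnz: "\<And>i. i < k \<Longrightarrow> g i \<noteq> 0"
  shows "det Mx = prod_list (map det Ms) * (\<Prod>i<k. g i)
     * det (mat k k (\<lambda>(i,j). if i = j then 1 / g i else 0) - C)"
proof -
  have lns: "length ns = k" unfolding ns_def k_def by simp
  define D where "D = bdiag Ms"
  define W where "W = mat n k (\<lambda>(u,i). if blk ns u = i then 1 else (0::complex))"
  define z where "z = (\<lambda>i. (Bs ! i) *\<^sub>v onesv (ns ! i))"
  define Y where "Y = mat n k (\<lambda>(u,i). if blk ns u = i then z i $ (u - boff ns i) else 0)"
  define G where "G = mat k k (\<lambda>(i,j). if i = j then g i else 0)"
  define Q where "Q = C * transpose_mat W"
  have D: "D \<in> carrier_mat n n" unfolding D_def n_def ns_def by (rule bdiag_carrier)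
  have W: "W \<in> carrier_mat n k" unfolding W_def by simp
  have Y: "Y \<in> carrier_mat n k" unfolding Y_def by simp
  have G: "G \<in> carrier_mat k k" unfolding G_def by simp
  have Q: "Q \<in> carrier_mat k n" unfolding Q_def using Cc W by simp
  have Dentry: "D $$ (u, v) = (if blk ns u = blk ns v then (Ms ! blk ns u) $$ (u - boff ns (blk ns u), v - boff ns (blk ns u)) else 0)"
    if "u < n" "v < n" for u v
    using that unfolding D_def bdiag_def Let_def ns_def[symmetric] n_def[symmetric] by simp
  have zdim: "i < k \<Longrightarrow> dim_vec (z i) = ns ! i" for i unfolding z_def using Bs by auto
  have gz: "g i = (\<Sum>v<ns ! i. z i $ v)" if i: "i < k" for i
  proof -
    have "g i = onesv (ns ! i) \<bullet> z i" unfolding g_def z_def by simp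
    then show ?thesis using zdim[OF i] by (simp add: scalar_prod_def onesv_def atLeast0LessThan)
  qed
  have WQ: "(W * Q) $$ (u, v) = C $$ (blk ns u, blk ns v)" if u: "u < n" and v: "v < n" for u v
  proof -
    have bu: "blk ns u < k" and bv: "blk ns v < k" using blk_bound[of u ns] blk_bound[of v ns] u v lns
      unfolding n_def by auto
    have "(W * Q) $$ (u, v) = (\<Sum>i<k. (if blk ns u = i then 1 else 0) * (\<Sum>j<k. C $$ (i, j) * (if blk ns v = j then 1 else 0)))"
      using u v W Q Cc unfolding Q_def W_def
      by (simp add: scalar_prod_def atLeast0LessThan)
    also have "\<dots> = C $$ (blk ns u, blk ns v)"
      using bu bv by (simp add: sum_delta_blk mult.commute[of "C $$ _"])
    finally show ?thesis .
  qed
  have step1: "Mx = D - W * Q"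
  proof (rule eq_matI)
    fix u v assume "u < dim_row (D - W * Q)" "v < dim_col (D - W * Q)"
    then have u: "u < n" and v: "v < n" using D W Q by auto
    have bu: "blk ns u < k" using blk_bound[of u ns] u lns unfolding n_def by auto
    show "Mx $$ (u, v) = (D - W * Q) $$ (u, v)"
      using u v D W Q entry[OF u v] Dentry[OF u v] WQ[OF u v] Cdiag[OF bu] by auto
  qed (use Mx D W Q in auto)
  have step2: "D * Y = W"
  proof (rule eq_matI)
    fix u i assume "u < dim_row W" "i < dim_col W"
    then have u: "u < n" and i: "i < k" unfolding W_def by auto
    note bb = blk_bound[of u ns, folded n_def, OF u]
    define b where "b = blk ns u"
    have "(D * Y) $$ (u, i) = (\<Sum>v<n. D $$ (u, v) * Y $$ (v, i))"
      using u i D Y by (simp add: scalar_prod_def atLeast0LessThan)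
    also have "\<dots> = (\<Sum>j<length ns. \<Sum>v<ns ! j. D $$ (u, boff ns j + v) * Y $$ (boff ns j + v, i))"
      unfolding n_def by (rule sum_split)
    also have "\<dots> = (\<Sum>j<length ns. if j = b \<and> j = i then (\<Sum>v<ns ! j. (Ms ! j) $$ (u - boff ns j, v) * z j $ v) else 0)"
    proof (rule sum.cong[OF refl])
      fix j assume j: "j \<in> {..<length ns}"
      show "(\<Sum>v<ns ! j. D $$ (u, boff ns j + v) * Y $$ (boff ns j + v, i)) =
        (if j = b \<and> j = i then (\<Sum>v<ns ! j. (Ms ! j) $$ (u - boff ns j, v) * z j $ v) else 0)"
      proof -
        have "(\<Sum>v<ns ! j. D $$ (u, boff ns j + v) * Y $$ (boff ns j + v, i)) =
           (\<Sum>v<ns ! j. if j = b \<and> j = i then (Ms ! j) $$ (u - boff ns j, v) * z j $ v else 0)"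
        proof (rule sum.cong[OF refl])
          fix v assume v: "v \<in> {..<ns ! j}"
          have bv: "blk ns (boff ns j + v) = j" using j v by (intro blk_off) auto
          have vl: "boff ns j + v < n" using boff_le_sum[of j ns] j v unfolding n_def by auto
          show "D $$ (u, boff ns j + v) * Y $$ (boff ns j + v, i) =
             (if j = b \<and> j = i then (Ms ! j) $$ (u - boff ns j, v) * z j $ v else 0)"
            using Dentry[OF u vl] bv vl i unfolding Y_def b_def by auto
        qed
        then show ?thesis by (cases "j = b \<and> j = i") auto
      qed
    qed
    also have "\<dots> = (if b = i then (\<Sum>v<ns ! i. (Ms ! i) $$ (u - boff ns i, v) * z i $ v) else 0)"
      using i lns by (cases "b = i") (auto intro!: sum.neutral)
    also have "\<dots> = W $$ (u, i)"
    proof (cases "b = i")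
      case True
      have ul: "u - boff ns i < ns ! i" using bb True unfolding b_def by auto
      have "(\<Sum>v<ns ! i. (Ms ! i) $$ (u - boff ns i, v) * z i $ v) = ((Ms ! i) *\<^sub>v z i) $ (u - boff ns i)"
        using Ms[OF i] ul zdim[OF i] by (simp add: scalar_prod_def atLeast0LessThan)
      also have "(Ms ! i) *\<^sub>v z i = onesv (ns ! i)"
        unfolding z_def using Ms[OF i] Bs[OF i] inv[OF i]
        by (simp add: assoc_mult_mat_vec[symmetric] onesv_def)
      finally show ?thesis using True ul u i unfolding W_def b_def onesv_def by simp
    next
      case False then show ?thesis using u i unfolding W_def b_def by simp
    qed
    finally show "(D * Y) $$ (u, i) = W $$ (u, i)" .
  qed (use D Y W in auto)
  have step3: "transpose_mat W * Y = G"
  proof (rule eq_matI)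
    fix i j assume "i < dim_row G" "j < dim_col G"
    then have i: "i < k" and j: "j < k" unfolding G_def by auto
    have "(transpose_mat W * Y) $$ (i, j) = (\<Sum>u<n. W $$ (u, i) * Y $$ (u, j))"
      using i j W Y by (simp add: scalar_prod_def atLeast0LessThan)
    also have "\<dots> = (\<Sum>l<length ns. \<Sum>v<ns ! l. W $$ (boff ns l + v, i) * Y $$ (boff ns l + v, j))"
      unfolding n_def by (rule sum_split)
    also have "\<dots> = (\<Sum>l<length ns. if l = i \<and> l = j then (\<Sum>v<ns ! l. z l $ v) else 0)"
    proof (rule sum.cong[OF refl])
      fix l assume l: "l \<in> {..<length ns}"
      have "(\<Sum>v<ns ! l. W $$ (boff ns l + v, i) * Y $$ (boff ns l + v, j)) =
          (\<Sum>v<ns ! l. if l = i \<and> l = j then z l $ v else 0)"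
      proof (rule sum.cong[OF refl])
        fix v assume v: "v \<in> {..<ns ! l}"
        have bv: "blk ns (boff ns l + v) = l" using l v by (intro blk_off) auto
        have vl: "boff ns l + v < n" using boff_le_sum[of l ns] l v unfolding n_def by auto
        show "W $$ (boff ns l + v, i) * Y $$ (boff ns l + v, j) = (if l = i \<and> l = j then z l $ v else 0)"
          using bv vl i j unfolding W_def Y_def by auto
      qed
      then show "(\<Sum>v<ns ! l. W $$ (boff ns l + v, i) * Y $$ (boff ns l + v, j)) =
          (if l = i \<and> l = j then (\<Sum>v<ns ! l. z l $ v) else 0)" by (cases "l = i \<and> l = j") auto
    qed
    also have "\<dots> = (if i = j then (\<Sum>v<ns ! i. z i $ v) else 0)"
      using i j lns by (cases "i = j") (auto intro!: sum.neutral)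
    also have "\<dots> = G $$ (i, j)"
      using i j gz[OF i] unfolding G_def by (cases "i = j") auto
    finally show "(transpose_mat W * Y) $$ (i, j) = G $$ (i, j)" .
  qed (use W Y G in auto)
  have step4: "Mx = D * (1\<^sub>m n + (- Y) * Q)"
  proof -
    have "D * (1\<^sub>m n + (- Y) * Q) = D * 1\<^sub>m n + D * ((- Y) * Q)"
      using D Y Q by (subst mult_add_distrib_mat[of _ n n]) auto
    also have "D * ((- Y) * Q) = - (W * Q)"
      using D Y Q step2 by (simp add: assoc_mult_mat[symmetric, of D n n Y k Q n])
    finally show ?thesis using step1 D W Q by auto
  qed
  have step5: "det Mx = det D * det (1\<^sub>m k - C * G)"
  proof -
    have "det Mx = det D * det (1\<^sub>m n + (- Y) * Q)"
      unfolding step4 using D Y Q by (subst det_mult[of _ n]) auto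
    also have "det (1\<^sub>m n + (- Y) * Q) = det (1\<^sub>m k + Q * (- Y))"
      using Y Q by (intro sylvester_det) auto
    also have "Q * (- Y) = - (C * G)"
      unfolding Q_def step3[symmetric] using Cc W Y
      by (simp add: assoc_mult_mat[of C k k "transpose_mat W" n Y k])
    moreover have "1\<^sub>m k + - (C * G) = 1\<^sub>m k - C * G"
      using Cc G by (intro add_uminus_minus_mat[of _ k k]) auto
    ultimately show ?thesis by simp
  qed
  define Dinv where "Dinv = mat k k (\<lambda>(i,j). if i = j then 1 / g i else (0::complex))"
  have step6: "1\<^sub>m k - C * G = (Dinv - C) * G"
  proof (rule eq_matI)
    fix i j assume "i < dim_row ((Dinv - C) * G)" "j < dim_col ((Dinv - C) * G)"
    then have i: "i < k" and j: "j < k" using G Cc unfolding Dinv_def by auto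
    have "((Dinv - C) * G) $$ (i, j) = (\<Sum>l<k. (Dinv - C) $$ (i, l) * G $$ (l, j))"
      using i j Cc G unfolding Dinv_def by (simp add: scalar_prod_def atLeast0LessThan)
    also have "\<dots> = (Dinv - C) $$ (i, j) * g j"
      using j unfolding G_def
      by (simp add: if_distrib[of "\<lambda>x. _ * x"] sum.delta' cong: if_cong)
    also have "\<dots> = (1\<^sub>m k - C * G) $$ (i, j)"
    proof -
      have "(C * G) $$ (i, j) = (\<Sum>l<k. C $$ (i, l) * G $$ (l, j))"
        using i j Cc G by (simp add: scalar_prod_def atLeast0LessThan)
      also have "\<dots> = C $$ (i, j) * g j" using j unfolding G_def
        by (simp add: if_distrib[of "\<lambda>x. _ * x"] sum.delta' cong: if_cong)
      finally show ?thesis using i j Cc G gnz[OF j] unfolding Dinv_def by (auto simp: algebra_simps)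
    qed
    finally show "(1\<^sub>m k - C * G) $$ (i, j) = ((Dinv - C) * G) $$ (i, j)" by simp
  qed (use Cc G in \<open>auto simp: Dinv_def\<close>)
  have detG: "det G = (\<Prod>i<k. g i)"
  proof -
    have "det G = prod_list (diag_mat G)"
      by (rule det_upper_triangular[OF _ G]) (auto simp: G_def upper_triangular_def)
    also have "\<dots> = (\<Prod>i = 0..<k. G $$ (i, i))" using G by (simp add: prod_list_diag_prod)
    also have "\<dots> = (\<Prod>i<k. g i)" unfolding G_def by (simp add: atLeast0LessThan)
    finally show ?thesis .
  qed
  have detD: "det D = prod_list (map det Ms)"
    unfolding D_def
  proof (rule det_bdiag)
    fix M assume "M \<in> set Ms"
    then obtain i where "i < k" "M = Ms ! i" unfolding k_def by (auto simp: in_set_conv_nth)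
    then show "M \<in> carrier_mat (dim_row M) (dim_row M)" using Ms[of i] by auto
  qed
  have "det Mx = det D * (det (Dinv - C) * det G)"
    unfolding step5 step6 using Cc G by (subst det_mult[of _ k]) (auto simp: Dinv_def)
  then show ?thesis unfolding detD detG Dinv_def by (simp add: mult_ac)
qed



lemma Umat_index:
  assumes "u < n" "v < n"
  shows "Umat \<alpha> \<beta> \<gamma> \<delta> n E $$ (u, v) =
    complex_of_real \<alpha> * (if E u v then 1 else 0) + (if u = v then complex_of_real \<beta> else 0)
    + complex_of_real \<gamma> + (if u = v then complex_of_real \<delta> * of_nat (degree n E u) else 0)"
  using assms by (simp add: Umat_def adjm_def degm_def allones_def)

lemma Umat_carrier[simp]: "Umat \<alpha> \<beta> \<gamma> \<delta> n E \<in> carrier_mat n n"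
  unfolding Umat_def adjm_def degm_def allones_def
  by (intro add_carrier_mat smult_carrier_mat mat_carrier one_carrier_mat)

lemma Umat_dims[simp]: "dim_row (Umat \<alpha> \<beta> \<gamma> \<delta> n E) = n" "dim_col (Umat \<alpha> \<beta> \<gamma> \<delta> n E) = n"
  using Umat_carrier[of \<alpha> \<beta> \<gamma> \<delta> n E] by (simp_all only: carrier_mat_def mem_Collect_eq)

lemma charmat_index:
  assumes "u < n" "v < n"
  shows "(x \<cdot>\<^sub>m 1\<^sub>m n - Umat \<alpha> \<beta> \<gamma> \<delta> n E) $$ (u, v) =
    (if u = v then x - complex_of_real \<beta> - complex_of_real \<delta> * of_nat (degree n E u) else 0)
    - complex_of_real \<alpha> * (if E u v then 1 else 0) - complex_of_real \<gamma>"
proof -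
  have "(x \<cdot>\<^sub>m 1\<^sub>m n - Umat \<alpha> \<beta> \<gamma> \<delta> n E) $$ (u, v) = x * (if u = v then 1 else 0) - Umat \<alpha> \<beta> \<gamma> \<delta> n E $$ (u, v)"
    using assms by simp
  also have "\<dots> = (if u = v then x - complex_of_real \<beta> - complex_of_real \<delta> * of_nat (degree n E u) else 0)
    - complex_of_real \<alpha> * (if E u v then 1 else 0) - complex_of_real \<gamma>"
    unfolding Umat_index[OF assms] by (cases "u = v"; cases "E u v") (simp_all add: algebra_simps)
  finally show ?thesis .
qed

lemma Gamma_inv:
  assumes "det (x \<cdot>\<^sub>m 1\<^sub>m n - Umat \<alpha> \<beta> \<gamma> \<delta> n E) \<noteq> 0"
  shows "\<exists>B. B \<in> carrier_mat n n \<and> (x \<cdot>\<^sub>m 1\<^sub>m n - Umat \<alpha> \<beta> \<gamma> \<delta> n E) * B = 1\<^sub>m n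
     \<and> Gamma \<alpha> \<beta> \<gamma> \<delta> n E x = onesv n \<bullet> (B *\<^sub>v onesv n)"
proof -
  let ?A = "x \<cdot>\<^sub>m 1\<^sub>m n - Umat \<alpha> \<beta> \<gamma> \<delta> n E"
  have A: "?A \<in> carrier_mat n n" unfolding carrier_mat_def by simp
  show ?thesis
  proof (cases "mat_inverse ?A")
    case None
    from mat_inverse(1)[OF A None, of "()"] det_non_zero_imp_unit[OF A assms, of "()"]
    show ?thesis by blast
  next
    case (Some B)
    have "Gamma \<alpha> \<beta> \<gamma> \<delta> n E x = onesv n \<bullet> (B *\<^sub>v onesv n)"
      unfolding Gamma_def using Some by simp
    with mat_inverse(2)[OF A Some] show ?thesis by blast
  qed
qed



abbreviation Mch where
  "Mch \<alpha> \<beta> \<gamma> \<delta> y t \<equiv> y \<cdot>\<^sub>m 1\<^sub>m (nleaves t) - Umat \<alpha> \<beta> \<gamma> \<delta> (nleaves t) (gr t)"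

lemma node_identity:
  fixes h ts x and \<alpha> \<beta> \<gamma> \<delta> :: real
  defines "k \<equiv> length ts"
  defines "y \<equiv> \<lambda>i. x - complex_of_real \<delta> * of_nat (Nchild (Node h ts) i)"
  assumes sg: "sgraph k h"
    and nz: "\<And>i. i < k \<Longrightarrow> Phi \<alpha> \<beta> \<gamma> \<delta> (nleaves (ts ! i)) (gr (ts ! i)) (y i) \<noteq> 0"
    and gnz: "\<And>i. i < k \<Longrightarrow> Gamma \<alpha> \<beta> \<gamma> \<delta> (nleaves (ts ! i)) (gr (ts ! i)) (y i) \<noteq> 0"
  shows "Phi \<alpha> \<beta> \<gamma> \<delta> (nleaves (Node h ts)) (gr (Node h ts)) x =
    (\<Prod>i<k. Phi \<alpha> \<beta> \<gamma> \<delta> (nleaves (ts ! i)) (gr (ts ! i)) (y i)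
           * Gamma \<alpha> \<beta> \<gamma> \<delta> (nleaves (ts ! i)) (gr (ts ! i)) (y i))
    * det (UGamma \<alpha> \<beta> \<gamma> \<delta> (Node h ts) x)"
proof -
  define gs where "gs = map (\<lambda>t. (nleaves t, gr t)) ts"
  define Ms where "Ms = map (\<lambda>i. Mch \<alpha> \<beta> \<gamma> \<delta> (y i) (ts ! i)) [0..<k]"
  have ex: "\<forall>i\<in>{..<k}. \<exists>B. B \<in> carrier_mat (nleaves (ts ! i)) (nleaves (ts ! i))
     \<and> Mch \<alpha> \<beta> \<gamma> \<delta> (y i) (ts ! i) * B = 1\<^sub>m (nleaves (ts ! i))
     \<and> Gamma \<alpha> \<beta> \<gamma> \<delta> (nleaves (ts ! i)) (gr (ts ! i)) (y i) = onesv (nleaves (ts ! i)) \<bullet> (B *\<^sub>v onesv (nleaves (ts ! i)))"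
    using nz by (auto intro!: Gamma_inv simp: Phi_def)
  then obtain f where f: "\<And>i. i < k \<Longrightarrow> f i \<in> carrier_mat (nleaves (ts ! i)) (nleaves (ts ! i))
     \<and> Mch \<alpha> \<beta> \<gamma> \<delta> (y i) (ts ! i) * f i = 1\<^sub>m (nleaves (ts ! i))
     \<and> Gamma \<alpha> \<beta> \<gamma> \<delta> (nleaves (ts ! i)) (gr (ts ! i)) (y i) = onesv (nleaves (ts ! i)) \<bullet> (f i *\<^sub>v onesv (nleaves (ts ! i)))"
    by (metis lessThan_iff)
  define Bs where "Bs = map f [0..<k]"
  have lMs: "length Ms = k" unfolding Ms_def by simp
  have Msi: "Ms ! i = Mch \<alpha> \<beta> \<gamma> \<delta> (y i) (ts ! i)" if "i < k" for i
    unfolding Ms_def using that by simp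
  have Bsi: "Bs ! i = f i" if "i < k" for i
    unfolding Bs_def using that by simp
  have dMs: "map dim_row Ms ! i = nleaves (ts ! i)" if "i < k" for i
    using that by (simp add: lMs Msi)
  have ns: "map dim_row Ms = map nleaves ts"
    by (rule nth_equalityI) (simp_all add: lMs k_def Msi)
  have sgs: "snd (gs ! i) = gr (ts ! i)" if "i < k" for i using that unfolding gs_def k_def by simp
  have fgs: "fst (gs ! i) = nleaves (ts ! i)" if "i < k" for i using that unfolding gs_def k_def by simp
  have nsg: "map fst gs = map nleaves ts" unfolding gs_def by simp
  have lgs: "length gs = k" unfolding gs_def k_def by simp
  have nT: "nleaves (Node h ts) = sum_list (map nleaves ts)" by simp
  have grT: "gr (Node h ts) = compose h gs" unfolding gs_def by simp
  define C where "C = mat k k (\<lambda>(i,j). if i = j then 0 else complex_of_real \<alpha> * (if h i j then 1 else 0) + complex_of_real \<gamma>)"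
  define g where "g = (\<lambda>i. onesv (map dim_row Ms ! i) \<bullet> ((Bs ! i) *\<^sub>v onesv (map dim_row Ms ! i)))"
  have gG: "g i = Gamma \<alpha> \<beta> \<gamma> \<delta> (nleaves (ts ! i)) (gr (ts ! i)) (y i)" if i: "i < k" for i
    using f[OF i] unfolding g_def dMs[OF i] Bsi[OF i] by simp
  have sym: "\<And>i j. i < length gs \<Longrightarrow> j < length gs \<Longrightarrow> h i j = h j i"
    and irr: "\<And>i. i < length gs \<Longrightarrow> \<not> h i i" using sg lgs unfolding sgraph_def by auto
  have Nch: "Nchild (Node h ts) i = (\<Sum>s<length gs. if h s i then fst (gs ! s) else 0)" for i
    unfolding gs_def by (auto intro!: sum.cong)
  have main: "det (x \<cdot>\<^sub>m 1\<^sub>m (nleaves (Node h ts)) - Umat \<alpha> \<beta> \<gamma> \<delta> (nleaves (Node h ts)) (gr (Node h ts)))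
     = prod_list (map det Ms) * (\<Prod>i<length Ms. g i)
     * det (mat (length Ms) (length Ms) (\<lambda>(i,j). if i = j then 1 / g i else 0) - C)"
    unfolding g_def
  proof (rule schur_blocks)
    show "length Bs = length Ms" unfolding Bs_def Ms_def by simp
    show "\<And>i. i < length Ms \<Longrightarrow> Ms ! i \<in> carrier_mat (map dim_row Ms ! i) (map dim_row Ms ! i)"
    proof -
      fix i assume i: "i < length Ms"
      then have i': "i < k" by (simp add: lMs)
      show "Ms ! i \<in> carrier_mat (map dim_row Ms ! i) (map dim_row Ms ! i)"
        unfolding dMs[OF i'] Msi[OF i'] carrier_mat_def by simp
    qed
    show "\<And>i. i < length Ms \<Longrightarrow> Bs ! i \<in> carrier_mat (map dim_row Ms ! i) (map dim_row Ms ! i)"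
    proof -
      fix i assume i: "i < length Ms"
      then have i': "i < k" by (simp add: lMs)
      show "Bs ! i \<in> carrier_mat (map dim_row Ms ! i) (map dim_row Ms ! i)"
        unfolding dMs[OF i'] Bsi[OF i'] using f[OF i'] by blast
    qed
    show "\<And>i. i < length Ms \<Longrightarrow> Ms ! i * Bs ! i = 1\<^sub>m (map dim_row Ms ! i)"
    proof -
      fix i assume i: "i < length Ms"
      then have i': "i < k" by (simp add: lMs)
      show "Ms ! i * Bs ! i = 1\<^sub>m (map dim_row Ms ! i)"
        unfolding dMs[OF i'] Bsi[OF i'] Msi[OF i'] using f[OF i'] by blast
    qed
    show "x \<cdot>\<^sub>m 1\<^sub>m (nleaves (Node h ts)) - Umat \<alpha> \<beta> \<gamma> \<delta> (nleaves (Node h ts)) (gr (Node h ts))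
      \<in> carrier_mat (sum_list (map dim_row Ms)) (sum_list (map dim_row Ms))"
      unfolding ns nT[symmetric] carrier_mat_def by simp
    show "C \<in> carrier_mat (length Ms) (length Ms)" unfolding C_def lMs by simp
    show "\<And>i. i < length Ms \<Longrightarrow> C $$ (i, i) = 0" unfolding C_def lMs by simp
    show "\<And>i. i < length Ms \<Longrightarrow> onesv (map dim_row Ms ! i) \<bullet> (Bs ! i *\<^sub>v onesv (map dim_row Ms ! i)) \<noteq> 0"
    proof -
      fix i assume i: "i < length Ms"
      then have i': "i < k" by (simp add: lMs)
      show "onesv (map dim_row Ms ! i) \<bullet> (Bs ! i *\<^sub>v onesv (map dim_row Ms ! i)) \<noteq> 0"
        using gG[OF i'] gnz[OF i'] unfolding g_def by simp
    qed
    fix u v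
    assume u: "u < sum_list (map dim_row Ms)" and v: "v < sum_list (map dim_row Ms)"
    let ?ns = "map nleaves ts"
    have u': "u < sum_list (map fst gs)" and v': "v < sum_list (map fst gs)" using u v unfolding ns nsg .
    note bu = blk_bound[OF u'[unfolded nsg]] and bv = blk_bound[OF v'[unfolded nsg]]
    define b where "b = blk ?ns u"
    define c where "c = blk ?ns v"
    have bk: "b < k" and ck: "c < k" using bu bv unfolding b_def c_def k_def by auto
    have comp: "compose h gs u v = (if b = c then gr (ts ! b) (u - boff ?ns b) (v - boff ?ns b) else h b c)"
      using compose_iff[OF u' v'] unfolding nsg b_def[symmetric] c_def[symmetric] sgs[OF bk] .
    have deg: "degree (sum_list ?ns) (compose h gs) u = degree (nleaves (ts ! b)) (gr (ts ! b)) (u - boff ?ns b)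
      + Nchild (Node h ts) b"
      using degree_compose[of gs h u, OF sym irr u'] unfolding nsg b_def[symmetric] Nch
      using bk by (simp add: gs_def k_def)
    have lhs: "(x \<cdot>\<^sub>m 1\<^sub>m (nleaves (Node h ts)) - Umat \<alpha> \<beta> \<gamma> \<delta> (nleaves (Node h ts)) (gr (Node h ts))) $$ (u, v)
      = (if u = v then x - complex_of_real \<beta> - complex_of_real \<delta> * of_nat (degree (sum_list ?ns) (compose h gs) u) else 0)
        - complex_of_real \<alpha> * (if compose h gs u v then 1 else 0) - complex_of_real \<gamma>"
      unfolding nT grT by (rule charmat_index) (use u v ns in auto)
    show "(x \<cdot>\<^sub>m 1\<^sub>m (nleaves (Node h ts)) - Umat \<alpha> \<beta> \<gamma> \<delta> (nleaves (Node h ts)) (gr (Node h ts))) $$ (u, v) =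
       (if blk (map dim_row Ms) u = blk (map dim_row Ms) v
        then Ms ! blk (map dim_row Ms) u $$
             (u - boff (map dim_row Ms) (blk (map dim_row Ms) u), v - boff (map dim_row Ms) (blk (map dim_row Ms) u))
        else - C $$ (blk (map dim_row Ms) u, blk (map dim_row Ms) v))"
    proof (cases "b = c")
      case True
      have ub: "u - boff ?ns b < nleaves (ts ! b)" and vb: "v - boff ?ns b < nleaves (ts ! b)"
        using bu bv True unfolding b_def c_def by auto
      have uv: "(u = v) = (u - boff ?ns b = v - boff ?ns b)" using bu bv True unfolding b_def c_def by auto
      have "Ms ! b $$ (u - boff ?ns b, v - boff ?ns b) =
        (if u - boff ?ns b = v - boff ?ns b then y b - complex_of_real \<beta> - complex_of_real \<delta> * of_nat (degree (nleaves (ts ! b)) (gr (ts ! b)) (u - boff ?ns b)) else 0)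
        - complex_of_real \<alpha> * (if gr (ts ! b) (u - boff ?ns b) (v - boff ?ns b) then 1 else 0) - complex_of_real \<gamma>"
        unfolding Ms_def using bk by (simp add: charmat_index[OF ub vb])
      then show ?thesis unfolding ns lhs b_def[symmetric] c_def[symmetric] using True comp deg uv
        by (simp add: y_def algebra_simps)
    next
      case False
      then have "u \<noteq> v" unfolding b_def c_def by auto
      then show ?thesis unfolding ns lhs b_def[symmetric] c_def[symmetric] using False comp bk ck
        by (simp add: C_def)
    qed
  qed
  have pM: "prod_list (map det Ms) = (\<Prod>i<k. Phi \<alpha> \<beta> \<gamma> \<delta> (nleaves (ts ! i)) (gr (ts ! i)) (y i))"
    unfolding Ms_def by (simp add: prod.list_conv_set_nth Phi_def atLeast0LessThan)
  have UG: "mat k k (\<lambda>(i,j). if i = j then 1 / g i else 0) - C = UGamma \<alpha> \<beta> \<gamma> \<delta> (Node h ts) x"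
  proof (rule eq_matI)
    fix i j assume "i < dim_row (UGamma \<alpha> \<beta> \<gamma> \<delta> (Node h ts) x)" "j < dim_col (UGamma \<alpha> \<beta> \<gamma> \<delta> (Node h ts) x)"
    then have i: "i < k" and j: "j < k" by (auto simp: k_def adjm_def allones_def)
    show "(mat k k (\<lambda>(i,j). if i = j then 1 / g i else 0) - C) $$ (i, j) = UGamma \<alpha> \<beta> \<gamma> \<delta> (Node h ts) x $$ (i, j)"
      using i j gG[OF i] irr[of i] lgs
      by (auto simp: C_def adjm_def allones_def y_def k_def)
  qed (auto simp: C_def adjm_def allones_def k_def)
  have "Phi \<alpha> \<beta> \<gamma> \<delta> (nleaves (Node h ts)) (gr (Node h ts)) x
     = prod_list (map det Ms) * (\<Prod>i<k. g i) * det (UGamma \<alpha> \<beta> \<gamma> \<delta> (Node h ts) x)"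
    unfolding Phi_def main lMs UG ..
  also have "(\<Prod>i<k. g i) = (\<Prod>i<k. Gamma \<alpha> \<beta> \<gamma> \<delta> (nleaves (ts ! i)) (gr (ts ! i)) (y i))"
    using gG by simp
  finally show ?thesis unfolding pM by (simp add: prod.distrib)
qed



lemma gamma_nonzero_large:
  fixes U B :: "complex mat" and y :: complex
  assumes U: "U \<in> carrier_mat n n" and n: "n \<ge> 1" and B: "B \<in> carrier_mat n n"
    and inv: "(y \<cdot>\<^sub>m 1\<^sub>m n - U) * B = 1\<^sub>m n"
    and large: "cmod y > 2 * (\<Sum>i<n. \<Sum>j<n. cmod (U $$ (i, j)))"
  shows "onesv n \<bullet> (B *\<^sub>v onesv n) \<noteq> 0"
proof
  assume z: "onesv n \<bullet> (B *\<^sub>v onesv n) = 0"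
  define K where "K = (\<Sum>i<n. \<Sum>j<n. cmod (U $$ (i, j)))"
  define v where "v = B *\<^sub>v onesv n"
  have dv: "dim_vec v = n" unfolding v_def using B by simp
  have Mv: "(y \<cdot>\<^sub>m 1\<^sub>m n - U) *\<^sub>v v = onesv n"
    unfolding v_def using B U inv
    by (subst assoc_mult_mat_vec[symmetric, of _ n n B n]) (auto simp: onesv_def)
  define w where "w = (\<lambda>i. \<Sum>j<n. U $$ (i, j) * v $ j)"
  have comp: "y * v $ i - w i = 1" if i: "i < n" for i
  proof -
    have "((y \<cdot>\<^sub>m 1\<^sub>m n - U) *\<^sub>v v) $ i = (\<Sum>j<n. (y * (if i = j then 1 else 0) - U $$ (i, j)) * v $ j)"
      using i U dv by (simp add: scalar_prod_def atLeast0LessThan)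
    also have "\<dots> = (\<Sum>j<n. (if i = j then y * v $ j else 0) - U $$ (i, j) * v $ j)"
      by (rule sum.cong) (auto simp: algebra_simps)
    also have "\<dots> = (\<Sum>j<n. (if i = j then y * v $ j else 0)) - w i"
      unfolding w_def by (rule sum_subtractf)
    also have "\<dots> = y * v $ i - w i" using i by simp
    finally show ?thesis using Mv i by (simp add: onesv_def)
  qed
  have sv: "(\<Sum>i<n. v $ i) = 0" using z dv unfolding v_def[symmetric]
    by (simp add: scalar_prod_def onesv_def atLeast0LessThan)
  have K0: "K \<ge> 0" unfolding K_def by (intro sum_nonneg) auto
  obtain i0 where i0: "i0 < n" and mx: "\<And>j. j < n \<Longrightarrow> cmod (v $ j) \<le> cmod (v $ i0)"
  proof -
    have fin: "finite ((\<lambda>j. cmod (v $ j)) ` {..<n})" by simp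
    have "0 \<in> {..<n}" using n by auto
    then have ne: "(\<lambda>j. cmod (v $ j)) ` {..<n} \<noteq> {}" by blast
    obtain i0 where "i0 < n" "cmod (v $ i0) = Max ((\<lambda>j. cmod (v $ j)) ` {..<n})"
      using Max_in[OF fin ne] by auto
    then show ?thesis using that[of i0] fin by (metis Max_ge image_eqI lessThan_iff)
  qed
  define m where "m = cmod (v $ i0)"
  have wb: "cmod (w i) \<le> (\<Sum>j<n. cmod (U $$ (i, j))) * m" if "i < n" for i
  proof -
    have "cmod (w i) \<le> (\<Sum>j<n. cmod (U $$ (i, j) * v $ j))" unfolding w_def by (rule norm_sum)
    also have "\<dots> \<le> (\<Sum>j<n. cmod (U $$ (i, j)) * m)"
      by (intro sum_mono) (auto simp: norm_mult m_def intro!: mult_left_mono mx)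
    finally show ?thesis by (simp add: sum_distrib_right)
  qed
  have rowK: "(\<Sum>j<n. cmod (U $$ (i, j))) \<le> K" if "i < n" for i
    unfolding K_def using that by (intro member_le_sum) (auto intro: sum_nonneg)
  have m0: "m \<ge> 0" unfolding m_def by simp
  have "(\<Sum>i<n. y * v $ i - w i) = of_nat n" using comp by simp
  then have "- (\<Sum>i<n. w i) = of_nat n" using sv by (simp add: sum_subtractf sum_distrib_left[symmetric])
  then have "real n = cmod (\<Sum>i<n. w i)" by (metis norm_minus_cancel norm_of_nat)
  also have "\<dots> \<le> (\<Sum>i<n. cmod (w i))" by (rule norm_sum)
  also have "\<dots> \<le> (\<Sum>i<n. (\<Sum>j<n. cmod (U $$ (i, j))) * m)" by (intro sum_mono wb) auto
  also have "\<dots> = K * m" unfolding K_def by (simp add: sum_distrib_right)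
  finally have a: "real n \<le> K * m" .
  have "cmod y * m = cmod (y * v $ i0)" by (simp add: norm_mult m_def)
  also have "y * v $ i0 = 1 + w i0" using comp[OF i0] by (simp add: algebra_simps)
  also have "cmod (1 + w i0) \<le> 1 + cmod (w i0)" by (metis norm_one norm_triangle_ineq)
  also have "\<dots> \<le> 1 + K * m"
  proof -
    have "(\<Sum>j<n. cmod (U $$ (i0, j))) * m \<le> K * m" using rowK[OF i0] m0 by (rule mult_right_mono)
    then show ?thesis using wb[OF i0] by linarith
  qed
  finally have b: "cmod y * m \<le> 1 + K * m" .
  define d where "d = cmod y - K"
  have Kd: "K < d" using large unfolding K_def d_def by simp
  have d0: "d \<ge> 0" using Kd K0 by simp
  have dm: "d * m \<le> 1" using b unfolding d_def by (simp add: algebra_simps)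
  have n1: "real n \<ge> 1" using n by simp
  have "d = 1 * d" by simp
  also have "\<dots> \<le> real n * d" using n1 d0 by (rule mult_right_mono)
  also have "\<dots> \<le> K * m * d" using a d0 by (rule mult_right_mono)
  also have "\<dots> = K * (d * m)" by simp
  also have "\<dots> \<le> K * 1" using dm K0 by (rule mult_left_mono)
  finally show False using Kd by simp
qed

lemma charpoly_eval:
  fixes A :: "complex mat"
  assumes A: "A \<in> carrier_mat n n"
  shows "poly (char_poly A) y = det (y \<cdot>\<^sub>m 1\<^sub>m n - A)"
proof -
  have "- (char_matrix A y) = y \<cdot>\<^sub>m 1\<^sub>m n - A"
    using A by (intro eq_matI) (auto simp: char_matrix_def)
  then show ?thesis using char_poly_matrix[OF A, of y] by simp
qed

lemma charpoly_nz:
  fixes A :: "complex mat"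
  assumes A: "A \<in> carrier_mat n n"
  shows "char_poly A \<noteq> 0"
  using degree_monic_char_poly[OF A] by auto

lemma Phi_roots_finite: "finite {y. Phi \<alpha> \<beta> \<gamma> \<delta> n E y = 0}"
proof -
  have "{y. Phi \<alpha> \<beta> \<gamma> \<delta> n E y = 0} = {y. poly (char_poly (Umat \<alpha> \<beta> \<gamma> \<delta> n E)) y = 0}"
    unfolding Phi_def charpoly_eval[OF Umat_carrier] ..
  then show ?thesis using poly_roots_finite[OF charpoly_nz[OF Umat_carrier]] by simp
qed

lemma det_rank_one:
  fixes M B :: "complex mat"
  assumes M: "M \<in> carrier_mat n n" and B: "B \<in> carrier_mat n n" and inv: "M * B = 1\<^sub>m n"
  shows "det (M + allones n) = det M * (1 + onesv n \<bullet> (B *\<^sub>v onesv n))"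
proof -
  define Col where "Col = mat n 1 (\<lambda>_. 1 :: complex)"
  define Row where "Row = mat 1 n (\<lambda>_. 1 :: complex)"
  have Col: "Col \<in> carrier_mat n 1" unfolding Col_def by simp
  have Row: "Row \<in> carrier_mat 1 n" unfolding Row_def by simp
  have J: "allones n = Col * Row"
    by (rule eq_matI) (auto simp: allones_def Col_def Row_def scalar_prod_def)
  have BC: "B * Col \<in> carrier_mat n 1" using B Col by simp
  have eq: "M + allones n = M * (1\<^sub>m n + (B * Col) * Row)"
  proof -
    have "M * (1\<^sub>m n + (B * Col) * Row) = M * 1\<^sub>m n + M * ((B * Col) * Row)"
      using M BC Row by (subst mult_add_distrib_mat[of _ n n]) auto
    also have "M * ((B * Col) * Row) = Col * Row"
    proof -
      have "M * ((B * Col) * Row) = (M * (B * Col)) * Row"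
        using M BC Row by (rule assoc_mult_mat[symmetric])
      also have "M * (B * Col) = (M * B) * Col"
        using M B Col by (rule assoc_mult_mat[symmetric])
      also have "(M * B) * Col = Col" unfolding inv using Col by simp
      finally show ?thesis .
    qed
    finally show ?thesis using M J by simp
  qed
  have "det (M + allones n) = det M * det (1\<^sub>m n + (B * Col) * Row)"
    unfolding eq using M BC Row by (subst det_mult[of _ n]) auto
  also have "det (1\<^sub>m n + (B * Col) * Row) = det (1\<^sub>m 1 + Row * (B * Col))"
    using BC Row by (rule sylvester_det)
  also have "\<dots> = (1\<^sub>m 1 + Row * (B * Col)) $$ (0, 0)"
    using BC Row by (intro det_single) auto
  also have "\<dots> = 1 + onesv n \<bullet> (B *\<^sub>v onesv n)"
  proof -
    have bc: "(B * Col) $$ (i, 0) = (\<Sum>j<n. B $$ (i, j))" if "i < n" for i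
      using that B unfolding Col_def by (simp add: scalar_prod_def atLeast0LessThan)
    have bv: "(B *\<^sub>v onesv n) $ i = (\<Sum>j<n. B $$ (i, j))" if "i < n" for i
      using that B unfolding onesv_def by (simp add: scalar_prod_def atLeast0LessThan)
    have "(Row * (B * Col)) $$ (0, 0) = (\<Sum>i<n. (B * Col) $$ (i, 0))"
      using B unfolding Row_def by (simp add: scalar_prod_def atLeast0LessThan Col_def)
    also have "\<dots> = (\<Sum>i<n. \<Sum>j<n. B $$ (i, j))" using bc by simp
    also have "\<dots> = onesv n \<bullet> (B *\<^sub>v onesv n)"
      using B bv by (simp add: scalar_prod_def atLeast0LessThan onesv_def)
    moreover have "dim_row (Row * (B * Col)) = 1" "dim_col (Row * (B * Col)) = 1"
      using Row BC by auto
    ultimately show ?thesis by simp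
  qed
  finally show ?thesis .
qed

lemma Gamma_zeros_finite:
  assumes n: "n \<ge> 1"
  shows "finite {y. Phi \<alpha> \<beta> \<gamma> \<delta> n E y \<noteq> 0 \<and> Gamma \<alpha> \<beta> \<gamma> \<delta> n E y = 0}"
proof -
  let ?U = "Umat \<alpha> \<beta> \<gamma> \<delta> n E"
  define q where "q = char_poly (?U - allones n) - char_poly ?U"
  have UJ: "?U - allones n \<in> carrier_mat n n" unfolding carrier_mat_def by (simp add: allones_def)
  have key: "poly q y = Phi \<alpha> \<beta> \<gamma> \<delta> n E y * Gamma \<alpha> \<beta> \<gamma> \<delta> n E y"
    if nz: "Phi \<alpha> \<beta> \<gamma> \<delta> n E y \<noteq> 0" for y
  proof -
    have nz': "det (y \<cdot>\<^sub>m 1\<^sub>m n - ?U) \<noteq> 0" using nz unfolding Phi_def .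
    from Gamma_inv[OF nz'] obtain B where B: "B \<in> carrier_mat n n" and inv: "(y \<cdot>\<^sub>m 1\<^sub>m n - ?U) * B = 1\<^sub>m n"
      and G: "Gamma \<alpha> \<beta> \<gamma> \<delta> n E y = onesv n \<bullet> (B *\<^sub>v onesv n)" by (elim exE conjE)
    have M: "y \<cdot>\<^sub>m 1\<^sub>m n - ?U \<in> carrier_mat n n" by (rule minus_carrier_mat[OF Umat_carrier])
    have "y \<cdot>\<^sub>m 1\<^sub>m n - (?U - allones n) = (y \<cdot>\<^sub>m 1\<^sub>m n - ?U) + allones n"
      by (rule eq_matI) (auto simp: allones_def)
    then have "poly (char_poly (?U - allones n)) y = det (y \<cdot>\<^sub>m 1\<^sub>m n - ?U) * (1 + Gamma \<alpha> \<beta> \<gamma> \<delta> n E y)"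
      unfolding charpoly_eval[OF UJ] G using det_rank_one[OF M B inv] by simp
    then show ?thesis unfolding q_def Phi_def using charpoly_eval[OF Umat_carrier, of \<alpha> \<beta> \<gamma> \<delta> n E y]
      by (simp add: algebra_simps)
  qed
  define K where "K = (\<Sum>i<n. \<Sum>j<n. cmod (?U $$ (i, j)))"
  define f where "f = (\<lambda>m::nat. complex_of_real (2 * K + 1 + real m))"
  have injf: "inj f" unfolding f_def by (intro injI) simp
  obtain m where m: "f m \<notin> {y. Phi \<alpha> \<beta> \<gamma> \<delta> n E y = 0}"
  proof (rule ccontr)
    assume "\<not> thesis"
    with that have "range f \<subseteq> {y. Phi \<alpha> \<beta> \<gamma> \<delta> n E y = 0}" by blast
    then have "finite (range f)" using Phi_roots_finite finite_subset by blast
    with injf show False using finite_imageD infinite_UNIV_nat by blast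
  qed
  define y0 where "y0 = f m"
  have K0: "K \<ge> 0" unfolding K_def by (intro sum_nonneg) auto
  have nz0: "Phi \<alpha> \<beta> \<gamma> \<delta> n E y0 \<noteq> 0" using m unfolding y0_def by simp
  have nz0': "det (y0 \<cdot>\<^sub>m 1\<^sub>m n - ?U) \<noteq> 0" using nz0 unfolding Phi_def .
  from Gamma_inv[OF nz0'] obtain B where B: "B \<in> carrier_mat n n" and inv: "(y0 \<cdot>\<^sub>m 1\<^sub>m n - ?U) * B = 1\<^sub>m n"
    and G: "Gamma \<alpha> \<beta> \<gamma> \<delta> n E y0 = onesv n \<bullet> (B *\<^sub>v onesv n)" by (elim exE conjE)
  have large: "cmod y0 > 2 * K" unfolding y0_def f_def norm_of_real using K0 by simp
  have g0: "Gamma \<alpha> \<beta> \<gamma> \<delta> n E y0 \<noteq> 0"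
    unfolding G by (rule gamma_nonzero_large[OF Umat_carrier n B inv]) (use large in \<open>simp add: K_def\<close>)
  have qnz: "q \<noteq> 0"
  proof
    assume "q = 0"
    then have "poly q y0 = 0" by simp
    with key[OF nz0] nz0 g0 show False by simp
  qed
  have "{y. Phi \<alpha> \<beta> \<gamma> \<delta> n E y \<noteq> 0 \<and> Gamma \<alpha> \<beta> \<gamma> \<delta> n E y = 0} \<subseteq> {y. poly q y = 0}"
  proof (intro subsetI)
    fix y assume "y \<in> {y. Phi \<alpha> \<beta> \<gamma> \<delta> n E y \<noteq> 0 \<and> Gamma \<alpha> \<beta> \<gamma> \<delta> n E y = 0}"
    then have a: "Phi \<alpha> \<beta> \<gamma> \<delta> n E y \<noteq> 0" and b: "Gamma \<alpha> \<beta> \<gamma> \<delta> n E y = 0" by auto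
    show "y \<in> {y. poly q y = 0}" using key[OF a] b by simp
  qed
  then show ?thesis using poly_roots_finite[OF qnz] finite_subset by blast
qed



lemma nleaves_pos: "wf_stree T \<Longrightarrow> nleaves T \<ge> 1"
proof (induction T)
  case Leaf then show ?case by simp
next
  case (Node h ts)
  then have "ts ! 0 \<in> set ts" by (auto intro!: nth_mem)
  with Node have "nleaves (ts ! 0) \<ge> 1" by simp
  moreover have "nleaves (ts ! 0) \<le> sum_list (map nleaves ts)"
    using \<open>ts ! 0 \<in> set ts\<close> by (simp add: member_le_sum_list)
  ultimately show ?case by simp
qed

lemma internal_Leaf[simp]: "internal Leaf = {}"
  unfolding internal_def by (auto elim: valid_path.elims)

lemma internal_Node: "internal (Node h ts) = insert [] (\<Union>i\<in>{..<length ts}. (Cons i) ` internal (ts ! i))"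
  unfolding set_eq_iff
proof
  fix p show "p \<in> internal (Node h ts) \<longleftrightarrow> p \<in> insert [] (\<Union>i\<in>{..<length ts}. (Cons i) ` internal (ts ! i))"
    by (cases p) (auto simp: internal_def)
qed

lemma internal_finite: "finite (internal T)"
proof (induction T)
  case Leaf then show ?case by simp
next
  case (Node h ts) then show ?case unfolding internal_Node by auto
qed

lemma MOST_shift: "MOST x. P x \<Longrightarrow> MOST x::complex. P (x - c)"
  by (rule MOST_inj) (auto intro: injI)

definition Fw :: "real \<Rightarrow> real \<Rightarrow> real \<Rightarrow> real \<Rightarrow> stree \<Rightarrow> nat list \<Rightarrow> complex \<Rightarrow> complex" where
  "Fw \<alpha> \<beta> \<gamma> \<delta> T w x =
     Gamma \<alpha> \<beta> \<gamma> \<delta> (nleaves (subtree T w)) (gr (subtree T w)) (x - complex_of_real \<delta> * of_nat (Npath T w))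
     * det (UGamma \<alpha> \<beta> \<gamma> \<delta> (subtree T w) (x - complex_of_real \<delta> * of_nat (Npath T w)))"

lemma prod_internal_Node:
  "(\<Prod>w\<in>internal (Node h ts) - {[]}. Fw \<alpha> \<beta> \<gamma> \<delta> (Node h ts) w x) =
   (\<Prod>i<length ts. \<Prod>p\<in>internal (ts ! i). Fw \<alpha> \<beta> \<gamma> \<delta> (ts ! i) p (x - complex_of_real \<delta> * of_nat (Nchild (Node h ts) i)))"
proof -
  have eqs: "internal (Node h ts) - {[]} = (\<Union>i\<in>{..<length ts}. (Cons i) ` internal (ts ! i))"
    unfolding internal_Node by auto
  have "(\<Prod>w\<in>internal (Node h ts) - {[]}. Fw \<alpha> \<beta> \<gamma> \<delta> (Node h ts) w x)
    = (\<Prod>i<length ts. \<Prod>w\<in>(Cons i) ` internal (ts ! i). Fw \<alpha> \<beta> \<gamma> \<delta> (Node h ts) w x)"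
    unfolding eqs by (subst prod.UNION_disjoint) (auto simp: internal_finite)
  also have "\<dots> = (\<Prod>i<length ts. \<Prod>p\<in>internal (ts ! i). Fw \<alpha> \<beta> \<gamma> \<delta> (Node h ts) (i # p) x)"
    by (rule prod.cong[OF refl]) (simp add: prod.reindex inj_on_def)
  also have "\<dots> = (\<Prod>i<length ts. \<Prod>p\<in>internal (ts ! i). Fw \<alpha> \<beta> \<gamma> \<delta> (ts ! i) p (x - complex_of_real \<delta> * of_nat (Nchild (Node h ts) i)))"
    by (intro prod.cong refl) (simp add: Fw_def algebra_simps del: Nchild.simps)
  finally show ?thesis .
qed

lemma tree_claim:
  assumes "wf_stree T"
  shows "(MOST x. Phi \<alpha> \<beta> \<gamma> \<delta> (nleaves T) (gr T) x * Gamma \<alpha> \<beta> \<gamma> \<delta> (nleaves T) (gr T) x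
           = (\<Prod>w\<in>internal T. Fw \<alpha> \<beta> \<gamma> \<delta> T w x))
       \<and> (\<forall>h ts. T = Node h ts \<longrightarrow> (MOST x. Phi \<alpha> \<beta> \<gamma> \<delta> (nleaves T) (gr T) x
           = (\<Prod>w\<in>internal T - {[]}. Fw \<alpha> \<beta> \<gamma> \<delta> T w x) * det (UGamma \<alpha> \<beta> \<gamma> \<delta> T x)))"
  using assms
proof (induction T)
  case Leaf
  have "MOST x. x \<noteq> complex_of_real \<beta> + complex_of_real \<gamma>" by (rule MOST_neq)
  then have "MOST x. Phi \<alpha> \<beta> \<gamma> \<delta> (nleaves Leaf) (gr Leaf) x * Gamma \<alpha> \<beta> \<gamma> \<delta> (nleaves Leaf) (gr Leaf) x = 1"
  proof (rule MOST_mono)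
    fix x :: complex assume x: "x \<noteq> complex_of_real \<beta> + complex_of_real \<gamma>"
    let ?A = "x \<cdot>\<^sub>m 1\<^sub>m 1 - Umat \<alpha> \<beta> \<gamma> \<delta> 1 (\<lambda>u v. False)"
    have A1: "?A \<in> carrier_mat 1 1" by (rule minus_carrier_mat[OF Umat_carrier])
    have a00: "?A $$ (0, 0) = x - complex_of_real \<beta> - complex_of_real \<gamma>"
      using charmat_index[of 0 1 0 x \<alpha> \<beta> \<gamma> \<delta> "\<lambda>u v. False"] by (simp add: degree_def)
    have dA: "det ?A = x - complex_of_real \<beta> - complex_of_real \<gamma>"
      using det_single[OF A1] a00 by simp
    have nz: "det ?A \<noteq> 0" using dA x by (simp add: diff_diff_eq)
    from Gamma_inv[OF nz] obtain B where B: "B \<in> carrier_mat 1 1" and inv: "?A * B = 1\<^sub>m 1"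
      and G: "Gamma \<alpha> \<beta> \<gamma> \<delta> 1 (\<lambda>u v. False) x = onesv 1 \<bullet> (B *\<^sub>v onesv 1)" by (elim exE conjE)
    have "(?A * B) $$ (0, 0) = ?A $$ (0, 0) * B $$ (0, 0)"
      using A1 B by (simp add: scalar_prod_def)
    then have "?A $$ (0, 0) * B $$ (0, 0) = 1" using inv by simp
    then have e0: "(x - complex_of_real \<beta> - complex_of_real \<gamma>) * B $$ (0, 0) = 1" unfolding a00 .
    have "onesv 1 \<bullet> (B *\<^sub>v onesv 1) = B $$ (0, 0)"
      using B by (simp add: scalar_prod_def onesv_def)
    then have e2: "Gamma \<alpha> \<beta> \<gamma> \<delta> 1 (\<lambda>u v. False) x = B $$ (0, 0)" using G by simp
    have e1: "Phi \<alpha> \<beta> \<gamma> \<delta> 1 (\<lambda>u v. False) x = x - complex_of_real \<beta> - complex_of_real \<gamma>"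
      unfolding Phi_def using dA .
    show "Phi \<alpha> \<beta> \<gamma> \<delta> (nleaves Leaf) (gr Leaf) x * Gamma \<alpha> \<beta> \<gamma> \<delta> (nleaves Leaf) (gr Leaf) x = 1"
      using e0 e1 e2 by simp
  qed
  then show ?case by simp
next
  case (Node h ts)
  let ?T = "Node h ts"
  let ?k = "length ts"
  define y where "y = (\<lambda>i x. x - complex_of_real \<delta> * of_nat (Nchild ?T i))"
  have wf: "?k \<ge> 2" "sgraph ?k h" "\<And>t. t \<in> set ts \<Longrightarrow> wf_stree t" using Node.prems by auto
  have IH: "MOST x. Phi \<alpha> \<beta> \<gamma> \<delta> (nleaves (ts ! i)) (gr (ts ! i)) x * Gamma \<alpha> \<beta> \<gamma> \<delta> (nleaves (ts ! i)) (gr (ts ! i)) x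
           = (\<Prod>w\<in>internal (ts ! i). Fw \<alpha> \<beta> \<gamma> \<delta> (ts ! i) w x)" if i: "i < ?k" for i
    using Node.IH[of "ts ! i"] wf(3)[of "ts ! i"] i by simp
  have ev: "MOST x. \<forall>i\<in>{..<?k}.
      Phi \<alpha> \<beta> \<gamma> \<delta> (nleaves (ts ! i)) (gr (ts ! i)) (y i x) \<noteq> 0
    \<and> Gamma \<alpha> \<beta> \<gamma> \<delta> (nleaves (ts ! i)) (gr (ts ! i)) (y i x) \<noteq> 0
    \<and> Phi \<alpha> \<beta> \<gamma> \<delta> (nleaves (ts ! i)) (gr (ts ! i)) (y i x) * Gamma \<alpha> \<beta> \<gamma> \<delta> (nleaves (ts ! i)) (gr (ts ! i)) (y i x)
           = (\<Prod>w\<in>internal (ts ! i). Fw \<alpha> \<beta> \<gamma> \<delta> (ts ! i) w (y i x))"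
  proof (rule eventually_ball_finite[OF finite_lessThan], intro ballI)
    fix i assume "i \<in> {..<?k}"
    then have i: "i < ?k" by simp
    let ?n = "nleaves (ts ! i)" and ?E = "gr (ts ! i)"
    have n1: "?n \<ge> 1" using nleaves_pos wf(3) i by simp
    have e1: "MOST x. Phi \<alpha> \<beta> \<gamma> \<delta> ?n ?E x \<noteq> 0"
      unfolding MOST_iff_cofinite using Phi_roots_finite by simp
    have e2: "MOST x. Phi \<alpha> \<beta> \<gamma> \<delta> ?n ?E x \<noteq> 0 \<longrightarrow> Gamma \<alpha> \<beta> \<gamma> \<delta> ?n ?E x \<noteq> 0"
      unfolding MOST_iff_cofinite using Gamma_zeros_finite[OF n1] by simp
    have "MOST x. Phi \<alpha> \<beta> \<gamma> \<delta> ?n ?E x \<noteq> 0 \<and> Gamma \<alpha> \<beta> \<gamma> \<delta> ?n ?E x \<noteq> 0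
      \<and> Phi \<alpha> \<beta> \<gamma> \<delta> ?n ?E x * Gamma \<alpha> \<beta> \<gamma> \<delta> ?n ?E x = (\<Prod>w\<in>internal (ts ! i). Fw \<alpha> \<beta> \<gamma> \<delta> (ts ! i) w x)"
      using e1 e2 IH[OF i] by eventually_elim auto
    from MOST_shift[OF this, of "complex_of_real \<delta> * of_nat (Nchild ?T i)"]
    show "MOST x. Phi \<alpha> \<beta> \<gamma> \<delta> ?n ?E (y i x) \<noteq> 0 \<and> Gamma \<alpha> \<beta> \<gamma> \<delta> ?n ?E (y i x) \<noteq> 0
      \<and> Phi \<alpha> \<beta> \<gamma> \<delta> ?n ?E (y i x) * Gamma \<alpha> \<beta> \<gamma> \<delta> ?n ?E (y i x) = (\<Prod>w\<in>internal (ts ! i). Fw \<alpha> \<beta> \<gamma> \<delta> (ts ! i) w (y i x))"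
      unfolding y_def .
  qed
  have Q: "MOST x. Phi \<alpha> \<beta> \<gamma> \<delta> (nleaves ?T) (gr ?T) x
           = (\<Prod>w\<in>internal ?T - {[]}. Fw \<alpha> \<beta> \<gamma> \<delta> ?T w x) * det (UGamma \<alpha> \<beta> \<gamma> \<delta> ?T x)"
    using ev
  proof (rule MOST_mono)
    fix x assume H: "\<forall>i\<in>{..<?k}.
      Phi \<alpha> \<beta> \<gamma> \<delta> (nleaves (ts ! i)) (gr (ts ! i)) (y i x) \<noteq> 0
    \<and> Gamma \<alpha> \<beta> \<gamma> \<delta> (nleaves (ts ! i)) (gr (ts ! i)) (y i x) \<noteq> 0
    \<and> Phi \<alpha> \<beta> \<gamma> \<delta> (nleaves (ts ! i)) (gr (ts ! i)) (y i x) * Gamma \<alpha> \<beta> \<gamma> \<delta> (nleaves (ts ! i)) (gr (ts ! i)) (y i x)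
           = (\<Prod>w\<in>internal (ts ! i). Fw \<alpha> \<beta> \<gamma> \<delta> (ts ! i) w (y i x))"
    have "Phi \<alpha> \<beta> \<gamma> \<delta> (nleaves ?T) (gr ?T) x =
      (\<Prod>i<?k. Phi \<alpha> \<beta> \<gamma> \<delta> (nleaves (ts ! i)) (gr (ts ! i)) (y i x)
           * Gamma \<alpha> \<beta> \<gamma> \<delta> (nleaves (ts ! i)) (gr (ts ! i)) (y i x))
      * det (UGamma \<alpha> \<beta> \<gamma> \<delta> ?T x)"
      unfolding y_def by (rule node_identity[OF wf(2)]) (use H in \<open>auto simp: y_def\<close>)
    also have "(\<Prod>i<?k. Phi \<alpha> \<beta> \<gamma> \<delta> (nleaves (ts ! i)) (gr (ts ! i)) (y i x)
           * Gamma \<alpha> \<beta> \<gamma> \<delta> (nleaves (ts ! i)) (gr (ts ! i)) (y i x))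
      = (\<Prod>i<?k. \<Prod>w\<in>internal (ts ! i). Fw \<alpha> \<beta> \<gamma> \<delta> (ts ! i) w (y i x))"
      using H by (intro prod.cong) auto
    also have "\<dots> = (\<Prod>w\<in>internal ?T - {[]}. Fw \<alpha> \<beta> \<gamma> \<delta> ?T w x)"
      unfolding prod_internal_Node y_def ..
    finally show "Phi \<alpha> \<beta> \<gamma> \<delta> (nleaves ?T) (gr ?T) x
           = (\<Prod>w\<in>internal ?T - {[]}. Fw \<alpha> \<beta> \<gamma> \<delta> ?T w x) * det (UGamma \<alpha> \<beta> \<gamma> \<delta> ?T x)" .
  qed
  have P: "MOST x. Phi \<alpha> \<beta> \<gamma> \<delta> (nleaves ?T) (gr ?T) x * Gamma \<alpha> \<beta> \<gamma> \<delta> (nleaves ?T) (gr ?T) x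
           = (\<Prod>w\<in>internal ?T. Fw \<alpha> \<beta> \<gamma> \<delta> ?T w x)"
    using Q
  proof (rule MOST_mono)
    fix x assume H: "Phi \<alpha> \<beta> \<gamma> \<delta> (nleaves ?T) (gr ?T) x
           = (\<Prod>w\<in>internal ?T - {[]}. Fw \<alpha> \<beta> \<gamma> \<delta> ?T w x) * det (UGamma \<alpha> \<beta> \<gamma> \<delta> ?T x)"
    have "internal ?T = insert [] (internal ?T - {[]})" unfolding internal_Node by auto
    then have "(\<Prod>w\<in>internal ?T. Fw \<alpha> \<beta> \<gamma> \<delta> ?T w x) = Fw \<alpha> \<beta> \<gamma> \<delta> ?T [] x * (\<Prod>w\<in>internal ?T - {[]}. Fw \<alpha> \<beta> \<gamma> \<delta> ?T w x)"
      by (metis Diff_iff finite_Diff insertCI internal_finite prod.insert)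
    then show "Phi \<alpha> \<beta> \<gamma> \<delta> (nleaves ?T) (gr ?T) x * Gamma \<alpha> \<beta> \<gamma> \<delta> (nleaves ?T) (gr ?T) x
           = (\<Prod>w\<in>internal ?T. Fw \<alpha> \<beta> \<gamma> \<delta> ?T w x)"
      unfolding H by (simp add: Fw_def mult_ac del: Nchild.simps nleaves.simps gr.simps UGamma.simps)
  qed
  show ?case using P Q by simp
qed


theorem mainTheorem11:
  fixes \<alpha> \<beta> \<gamma> \<delta> :: real and T :: stree
  assumes "\<alpha> \<noteq> 0"
    and "wf_stree T"
    and "nleaves T \<ge> 2"
  shows "\<forall>\<^sub>F x in cofinite.
    Phi \<alpha> \<beta> \<gamma> \<delta> (nleaves T) (gr T) x =
      (\<Prod>w \<in> internal T - {[]}.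
          Gamma \<alpha> \<beta> \<gamma> \<delta> (nleaves (subtree T w)) (gr (subtree T w))
             (x - complex_of_real \<delta> * of_nat (Npath T w))
        * det (UGamma \<alpha> \<beta> \<gamma> \<delta> (subtree T w)
             (x - complex_of_real \<delta> * of_nat (Npath T w))))
      * det (UGamma \<alpha> \<beta> \<gamma> \<delta> T x)"
proof -
  obtain h ts where T: "T = Node h ts"
    using assms(3) by (cases T) auto
  have "MOST x. Phi \<alpha> \<beta> \<gamma> \<delta> (nleaves T) (gr T) x
           = (\<Prod>w\<in>internal T - {[]}. Fw \<alpha> \<beta> \<gamma> \<delta> T w x) * det (UGamma \<alpha> \<beta> \<gamma> \<delta> T x)"
    using tree_claim[OF assms(2), of \<alpha> \<beta> \<gamma> \<delta>] T by blast
  then show ?thesis unfolding Fw_def .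
qed

end
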